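(* Let $K$ be a simplicial complex on $[m]$ which has a minimal Taylor resolution, and let $\Bbbk$ be a commutative ring. If $\Bbbk[K]$ is Golod, then any two distinct minimal non-faces of $K$ are not disjoint.
   Context: A minimal non-face of $K$ is a non-empty $N\subset[m]$ with $N\notin K$ and $N-\{i\}\in K$ for all $i\in N$. $\Bbbk[K]=\Bbbk[v_1,\ldots,v_m]/(v_I\mid I\notin K)$, $|v_i|=2$; it is Golod if all products and (higher) Massey products in the positive-degree part of $\mathrm{Tor}_{\Bbbk[v_1,\ldots,v_m]}(\Bbbk[K],\Bbbk)$ (induced from the Koszul resolution) are trivial. With $N_1,\ldots,N_r$ the minimal non-faces, $K$ has a minimal Taylor resolution if the Taylor resolution of $\Bbbk[K]$ (free on $w_{i_1,\ldots,i_\ell}$, $d(w_{i_1,\ldots,i_\ell})=\sum_k(-1)^{k+1}v_{(N_{i_1}\cup\cdots\cup N_{i_\ell})-(N_{i_1}\cup\cdots\widehat{N_{i_k}}\cdots\cup N_{i_\ell})}w_{i_1,\ldots,\widehat{i_k},\ldots,i_\ell}$, $v_\emptyset=1$) satisfies $d\otimes\Bbbk=0$; equivalently $N_i\not\subset\bigcup_{k\ne i}N_k$ for all $i$. *)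

theory Defs
  imports Main
begin

definition simplicial_complex :: "nat \<Rightarrow> nat set set \<Rightarrow> bool" where
  "simplicial_complex m K \<longleftrightarrow>
     {} \<in> K \<and> (\<forall>\<sigma>\<in>K. \<sigma> \<subseteq> {1..m}) \<and> (\<forall>\<sigma>\<in>K. \<forall>\<tau>. \<tau> \<subseteq> \<sigma> \<longrightarrow> \<tau> \<in> K)"

definition minimal_nonface :: "nat \<Rightarrow> nat set set \<Rightarrow> nat set \<Rightarrow> bool" where
  "minimal_nonface m K N \<longleftrightarrow>
     N \<subseteq> {1..m} \<and> N \<noteq> {} \<and> N \<notin> K \<and> (\<forall>i\<in>N. N - {i} \<in> K)"

text \<open>K has a minimal Taylor resolution: the Taylor differential tensored with k vanishes,
  i.e. every coefficient monomial v_{(N_{i_1} \<union> ... \<union> N_{i_l}) - (... hat N_{i_k} ...)} has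
  non-empty index set (the empty one gives v_\<emptyset> = 1).\<close>

definition minimal_Taylor :: "nat \<Rightarrow> nat set set \<Rightarrow> bool" where
  "minimal_Taylor m K \<longleftrightarrow>
     (\<forall>I. I \<subseteq> {N. minimal_nonface m K N} \<and> I \<noteq> {} \<longrightarrow>
        (\<forall>N\<in>I. \<Union>I - \<Union>(I - {N}) \<noteq> {}))"

text \<open>Koszul complex \<Lambda>[u_1..u_m] \<otimes> k[K] (which computes Tor_{k[v]}(k[K],k) as an algebra).
  Basis elements u_J v^\<alpha> are pairs (J, \<alpha>) with J \<subseteq> [m] and supp \<alpha> \<in> K;
  u_J is the increasing exterior monomial.\<close>

definition msupp :: "(nat \<Rightarrow> nat) \<Rightarrow> nat set" where
  "msupp \<alpha> = {i. \<alpha> i \<noteq> 0}"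

definition kbasis :: "nat \<Rightarrow> nat set set \<Rightarrow> (nat set \<times> (nat \<Rightarrow> nat)) set" where
  "kbasis m K = {(J, \<alpha>). J \<subseteq> {1..m} \<and> msupp \<alpha> \<in> K}"

definition kchains :: "nat \<Rightarrow> nat set set \<Rightarrow> ((nat set \<times> (nat \<Rightarrow> nat)) \<Rightarrow> 'k::comm_ring_1) set" where
  "kchains m K = {f. finite {x. f x \<noteq> 0} \<and> {x. f x \<noteq> 0} \<subseteq> kbasis m K}"

text \<open>Sign with u_j \<and> u_{J-{j}} = ksign j J * u_J for j \<in> J.\<close>
definition ksign :: "nat \<Rightarrow> nat set \<Rightarrow> 'k::comm_ring_1" where
  "ksign j J = (-1) ^ card {i\<in>J. i < j}"

text \<open>Sign with u_{J1} u_{J2} = ssign J1 J2 * u_{J1 \<union> J2} for disjoint J1, J2.\<close>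
definition ssign :: "nat set \<Rightarrow> nat set \<Rightarrow> 'k::comm_ring_1" where
  "ssign J1 J2 = (-1) ^ card {(a, b). a \<in> J1 \<and> b \<in> J2 \<and> b < a}"

text \<open>Koszul differential d(u_j) = v_j, d(v_j) = 0, extended as a derivation.\<close>
definition kdiff :: "nat \<Rightarrow> nat set set \<Rightarrow> ((nat set \<times> (nat \<Rightarrow> nat)) \<Rightarrow> 'k::comm_ring_1)
     \<Rightarrow> ((nat set \<times> (nat \<Rightarrow> nat)) \<Rightarrow> 'k)" where
  "kdiff m K f = (\<lambda>(J, \<beta>). if (J, \<beta>) \<in> kbasis m K then
      (\<Sum>j \<in> {j\<in>{1..m}. j \<notin> J \<and> 0 < \<beta> j}.
          ksign j (insert j J) * f (insert j J, \<beta>(j := \<beta> j - 1)))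
    else 0)"

definition kmult :: "nat \<Rightarrow> nat set set \<Rightarrow> ((nat set \<times> (nat \<Rightarrow> nat)) \<Rightarrow> 'k::comm_ring_1)
     \<Rightarrow> ((nat set \<times> (nat \<Rightarrow> nat)) \<Rightarrow> 'k) \<Rightarrow> ((nat set \<times> (nat \<Rightarrow> nat)) \<Rightarrow> 'k)" where
  "kmult m K f g = (\<lambda>(J, \<gamma>). if (J, \<gamma>) \<in> kbasis m K then
      (\<Sum>J1 \<in> Pow J. \<Sum>\<alpha> \<in> {\<alpha>. \<forall>i. \<alpha> i \<le> \<gamma> i}.
          ssign J1 (J - J1) * f (J1, \<alpha>) * g (J - J1, \<lambda>i. \<gamma> i - \<alpha> i))
    else 0)"

text \<open>\<bar>a = (-1)^{|a|+1} a, extended linearly (homological degree = |J|, parity of total degree).\<close>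
definition kbar :: "((nat set \<times> (nat \<Rightarrow> nat)) \<Rightarrow> 'k::comm_ring_1) \<Rightarrow> ((nat set \<times> (nat \<Rightarrow> nat)) \<Rightarrow> 'k)" where
  "kbar f = (\<lambda>(J, \<alpha>). (-1) ^ (card J + 1) * f (J, \<alpha>))"

definition khomog :: "nat \<Rightarrow> ((nat set \<times> (nat \<Rightarrow> nat)) \<Rightarrow> 'k::comm_ring_1) \<Rightarrow> bool" where
  "khomog m f \<longleftrightarrow> (\<exists>i j. \<forall>J \<alpha>. f (J, \<alpha>) \<noteq> 0 \<longrightarrow> card J = i \<and> card J + sum \<alpha> {1..m} = j)"

text \<open>Positive degree part: no component on the unit u_\<emptyset> v^0.\<close>
definition kpos :: "((nat set \<times> (nat \<Rightarrow> nat)) \<Rightarrow> 'k::comm_ring_1) \<Rightarrow> bool" where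
  "kpos f \<longleftrightarrow> f ({}, \<lambda>_. 0) = 0"

text \<open>Golod (Golod / Gulliksen--Levin): the positive part of Tor = H(Koszul complex) admits a
  trivial Massey operation on a homogeneous generating system: all products and all higher
  Massey products vanish.\<close>
definition golod :: "'k::comm_ring_1 itself \<Rightarrow> nat \<Rightarrow> nat set set \<Rightarrow> bool" where
  "golod _ m K \<longleftrightarrow>
    (\<exists>(B :: ((nat set \<times> (nat \<Rightarrow> nat)) \<Rightarrow> 'k) set) \<mu>.
       B \<subseteq> {z \<in> kchains m K. kdiff m K z = (\<lambda>_. 0) \<and> kpos z \<and> khomog m z} \<and>
       (\<forall>z \<in> kchains m K. kdiff m K z = (\<lambda>_. 0) \<and> kpos z \<longrightarrow>
          (\<exists>F c w. finite F \<and> F \<subseteq> B \<and> w \<in> kchains m K \<and>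
             z = (\<lambda>x. (\<Sum>b\<in>F. c b * b x) + kdiff m K w x))) \<and>
       (\<forall>b\<in>B. \<mu> [b] = b) \<and>
       (\<forall>bs. set bs \<subseteq> B \<and> 2 \<le> length bs \<longrightarrow>
          \<mu> bs \<in> kchains m K \<and> kpos (\<mu> bs) \<and>
          kdiff m K (\<mu> bs) =
            (\<lambda>x. \<Sum>j\<in>{1..<length bs}. kmult m K (kbar (\<mu> (take j bs))) (\<mu> (drop j bs)) x)))"

end

theory Submission
  imports Defs
begin

definition ind :: "nat set \<Rightarrow> nat \<Rightarrow> nat" where
  "ind T = (\<lambda>i. if i \<in> T then 1 else 0)"

lemma msupp_ind[simp]: "msupp (ind T) = T"
  by (auto simp: msupp_def ind_def)

lemma ind_inj[simp]: "(ind A = ind B) = (A = B)"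
proof
  assume "ind A = ind B"
  then have "\<And>i. ind A i = ind B i" by simp
  then show "A = B" unfolding ind_def by (intro set_eqI) (metis one_neq_zero)
qed simp

lemma kdiff_pt:
  assumes "J \<subseteq> {1..m}" "S \<subseteq> {1..m}" "J \<inter> S = {}"
  shows "kdiff m K f (J, ind S) = (if S \<in> K then
     (\<Sum>j\<in>S. ksign j (insert j J) * f (insert j J, ind (S - {j}))) else 0)"
proof -
  have e: "{j\<in>{1..m}. j \<notin> J \<and> 0 < ind S j} = S" using assms by (auto simp: ind_def)
  have u: "j \<in> S \<Longrightarrow> (ind S)(j := ind S j - Suc 0) = ind (S - {j})" for j
    by (auto simp: ind_def)
  have "kdiff m K f (J, ind S) = (if (J, ind S) \<in> kbasis m K then
      (\<Sum>j \<in> {j\<in>{1..m}. j \<notin> J \<and> 0 < ind S j}.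
          ksign j (insert j J) * f (insert j J, (ind S)(j := ind S j - 1))) else 0)"
    unfolding kdiff_def prod.case ..
  also have "\<dots> = (if S \<in> K then
     (\<Sum>j\<in>S. ksign j (insert j J) * f (insert j J, ind (S - {j}))) else 0)"
    unfolding e using assms(1) by (auto simp: kbasis_def u intro!: sum.cong)
  finally show ?thesis .
qed

lemma ind_le_set: "finite S \<Longrightarrow> {\<alpha>. \<forall>i. \<alpha> i \<le> ind S i} = ind ` Pow S"
proof safe
  fix \<alpha> assume a: "\<forall>i. \<alpha> i \<le> ind S i"
  have "\<alpha> = ind {i. \<alpha> i = 1}"
  proof
    fix i show "\<alpha> i = ind {i. \<alpha> i = 1} i" using a[rule_format, of i]
      by (auto simp: ind_def split: if_splits)
  qed
  moreover have "{i. \<alpha> i = 1} \<subseteq> S" using a by (auto simp: ind_def split: if_splits)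
  ultimately show "\<alpha> \<in> ind ` Pow S" by blast
next
  fix T i assume "T \<subseteq> S" then show "ind T i \<le> ind S i" by (auto simp: ind_def)
qed

lemma kmult_pt:
  assumes "J \<subseteq> {1..m}" "S \<in> K" "finite S" "finite J" "J \<inter> S = {}"
  shows "kmult m K f g (J, ind S) = (\<Sum>S1\<in>Pow (J \<union> S).
      ssign (S1 \<inter> J) (J - S1) * f (S1 \<inter> J, ind (S1 - J)) * g (J - S1, ind (S - S1)))"
proof -
  have b: "(J, ind S) \<in> kbasis m K" using assms by (simp add: kbasis_def)
  have "kmult m K f g (J, ind S) = (\<Sum>J1 \<in> Pow J. \<Sum>\<alpha> \<in> ind ` Pow S.
          ssign J1 (J - J1) * f (J1, \<alpha>) * g (J - J1, \<lambda>i. ind S i - \<alpha> i))"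
    using b assms by (simp add: kmult_def ind_le_set)
  also have "\<dots> = (\<Sum>J1 \<in> Pow J. \<Sum>T \<in> Pow S.
          ssign J1 (J - J1) * f (J1, ind T) * g (J - J1, ind (S - T)))"
  proof (rule sum.cong[OF refl])
    fix J1
    have "inj_on ind (Pow S)" by (auto simp: inj_on_def)
    then have "(\<Sum>\<alpha> \<in> ind ` Pow S. ssign J1 (J - J1) * f (J1, \<alpha>) * g (J - J1, \<lambda>i. ind S i - \<alpha> i))
       = (\<Sum>T \<in> Pow S. ssign J1 (J - J1) * f (J1, ind T) * g (J - J1, \<lambda>i. ind S i - ind T i))"
      by (simp add: sum.reindex)
    also have "\<dots> = (\<Sum>T \<in> Pow S. ssign J1 (J - J1) * f (J1, ind T) * g (J - J1, ind (S - T)))"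
    proof (rule sum.cong[OF refl])
      fix T assume "T \<in> Pow S"
      then have "(\<lambda>i. ind S i - ind T i) = ind (S - T)" by (auto simp: ind_def)
      then show "ssign J1 (J - J1) * f (J1, ind T) * g (J - J1, \<lambda>i. ind S i - ind T i) =
          ssign J1 (J - J1) * f (J1, ind T) * g (J - J1, ind (S - T))" by simp
    qed
    finally show "(\<Sum>\<alpha> \<in> ind ` Pow S. ssign J1 (J - J1) * f (J1, \<alpha>) * g (J - J1, \<lambda>i. ind S i - \<alpha> i))
       = (\<Sum>T \<in> Pow S. ssign J1 (J - J1) * f (J1, ind T) * g (J - J1, ind (S - T)))" .
  qed
  also have "\<dots> = (\<Sum>(J1,T) \<in> Pow J \<times> Pow S.
          ssign J1 (J - J1) * f (J1, ind T) * g (J - J1, ind (S - T)))"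
    by (simp add: sum.cartesian_product)
  also have "\<dots> = (\<Sum>S1\<in>Pow (J \<union> S).
      ssign (S1 \<inter> J) (J - S1) * f (S1 \<inter> J, ind (S1 - J)) * g (J - S1, ind (S - S1)))"
    apply (rule sum.reindex_bij_witness[of _ "\<lambda>S1. (S1 \<inter> J, S1 - J)" "\<lambda>(J1,T). J1 \<union> T"])
    using assms(5) apply auto
    subgoal for a b
    proof -
      assume h: "J \<inter> S = {}" "a \<subseteq> J" "b \<subseteq> S"
      then have "(a \<union> b) \<inter> J = a" "J - (a \<union> b) = J - a" "a \<union> b - J = b" "S - (a \<union> b) = S - b" by auto
      then show ?thesis by simp
    qed
    done
  finally show ?thesis .
qed

definition sg :: "nat \<Rightarrow> nat \<Rightarrow> 'k::comm_ring_1" where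
  "sg a b = (if b < a then -1 else 1)"

definition eF :: "nat set \<Rightarrow> ((nat set \<times> (nat \<Rightarrow> nat)) \<Rightarrow> 'k::comm_ring_1) \<Rightarrow> 'k" where
  "eF A f = f ({}, ind A)"

definition PhiF :: "nat set \<Rightarrow> nat set \<Rightarrow> nat set \<Rightarrow> ((nat set \<times> (nat \<Rightarrow> nat)) \<Rightarrow> 'k::comm_ring_1) \<Rightarrow> 'k" where
  "PhiF P Q A f = (\<Sum>a\<in>A\<inter>P. \<Sum>b\<in>A\<inter>Q. sg a b * f ({a,b}, ind (A - {a,b})))"

definition sigF :: "nat set \<Rightarrow> nat set \<Rightarrow> ((nat set \<times> (nat \<Rightarrow> nat)) \<Rightarrow> 'k::comm_ring_1) \<Rightarrow> 'k" where
  "sigF P A f = (\<Sum>a\<in>A\<inter>P. f ({a}, ind (A - {a})))"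

lemma ssign_empty1[simp]: "ssign {} X = 1" by (simp add: ssign_def)
lemma ssign_empty2[simp]: "ssign X {} = 1" by (simp add: ssign_def)
lemma ssign_single: "ssign {a} {b} = sg a b"
proof -
  have "{(x, y). x \<in> {a} \<and> y \<in> {b} \<and> y < x} = (if b < a then {(a,b)} else {})" by auto
  then show ?thesis by (simp add: ssign_def sg_def)
qed
lemma ksign_single[simp]: "ksign j {j} = 1"
proof -
  have e: "{i\<in>{j}. i < j} = {}" by auto
  show ?thesis unfolding ksign_def e by simp
qed
lemma ksign_pair: "j \<noteq> b \<Longrightarrow> ksign j {j, b} = sg j b"
proof -
  assume "j \<noteq> b"
  have "{i\<in>{j, b}. i < j} = (if b < j then {b} else {})" by auto
  then show ?thesis by (simp add: ksign_def sg_def)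
qed
lemma ksign_triple: "j \<noteq> a \<Longrightarrow> j \<noteq> b \<Longrightarrow> a \<noteq> b \<Longrightarrow>
   ksign j {j, a, b} = ((-1) ^ ((if a < j then 1 else 0) + (if b < j then 1 else 0)) :: 'k::comm_ring_1)"
proof -
  assume "j \<noteq> a" "j \<noteq> b" "a \<noteq> b"
  have "{i\<in>{j, a, b}. i < j} = (if a < j then {a} else {}) \<union> (if b < j then {b} else {})" by auto
  then show ?thesis using \<open>a \<noteq> b\<close> by (simp add: ksign_def)
qed
lemma sign3a: "j \<noteq> a \<Longrightarrow> j \<noteq> b \<Longrightarrow> a \<noteq> b \<Longrightarrow>
   sg a b * ksign j {j, a, b} = - (sg j b * ksign a {a, j, b} :: 'k::comm_ring_1)"
  by (simp add: ksign_triple sg_def)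

lemma sign3b: "j \<noteq> a \<Longrightarrow> j \<noteq> b \<Longrightarrow> a \<noteq> b \<Longrightarrow>
   sg a b * ksign j {j, a, b} = - (sg a j * ksign b {b, a, j} :: 'k::comm_ring_1)"
  by (simp add: ksign_triple sg_def)

lemma antisym_sum:
  fixes F :: "nat \<Rightarrow> nat \<Rightarrow> 'k::comm_ring_1"
  assumes "finite A" "\<And>a j. a \<in> A \<Longrightarrow> j \<in> A \<Longrightarrow> a \<noteq> j \<Longrightarrow> F a j = - F j a"
  shows "(\<Sum>a\<in>A. \<Sum>j\<in>A - {a}. F a j) = 0"
proof -
  have s: "A - {a} = {j\<in>A. j < a} \<union> {j\<in>A. a < j}" for a by auto
  have "(\<Sum>a\<in>A. \<Sum>j\<in>A - {a}. F a j) = (\<Sum>a\<in>A. (\<Sum>j\<in>{j\<in>A. j < a}. F a j) + (\<Sum>j\<in>{j\<in>A. a < j}. F a j))"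
    using assms(1) by (auto simp: s intro!: sum.cong sum.union_disjoint)
  also have "\<dots> = (\<Sum>a\<in>A. \<Sum>j\<in>{j\<in>A. j < a}. F a j) + (\<Sum>a\<in>A. \<Sum>j\<in>{j\<in>A. a < j}. F a j)"
    by (simp add: sum.distrib)
  also have "(\<Sum>a\<in>A. \<Sum>j\<in>{j\<in>A. a < j}. F a j) = (\<Sum>j\<in>A. \<Sum>a\<in>{a\<in>A. a < j}. F a j)"
    by (rule sum.swap_restrict[OF assms(1) assms(1)])
  also have "\<dots> = (\<Sum>j\<in>A. \<Sum>a\<in>{a\<in>A. a < j}. - F j a)"
    apply (rule sum.cong[OF refl])+
    apply (rule assms(2))
    apply auto
    done
  finally show ?thesis by (simp add: sum_negf)
qed

definition Psi :: "nat \<Rightarrow> nat set set \<Rightarrow> nat set \<Rightarrow> nat set \<Rightarrow> ((nat set \<times> (nat \<Rightarrow> nat)) \<Rightarrow> 'k::comm_ring_1)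
   \<Rightarrow> ((nat set \<times> (nat \<Rightarrow> nat)) \<Rightarrow> 'k) \<Rightarrow> 'k" where
  "Psi m K P Q f g = PhiF P Q (P \<union> Q) (kmult m K (kbar f) g)"

lemma sum_if2:
  assumes "finite P" "finite Q"
  shows "(\<Sum>a\<in>P. \<Sum>b\<in>Q. if a \<in> U \<and> b \<in> V then X a b else 0) = (\<Sum>a\<in>U\<inter>P. \<Sum>b\<in>V\<inter>Q. X a b)"
proof -
  have "(\<Sum>a\<in>U\<inter>P. \<Sum>b\<in>V\<inter>Q. X a b) = (\<Sum>a\<in>P. if a \<in> U then (\<Sum>b\<in>Q. if b \<in> V then X a b else 0) else 0)"
    using assms by (simp add: Int_commute sum.inter_restrict)
  also have "\<dots> = (\<Sum>a\<in>P. \<Sum>b\<in>Q. if a \<in> U \<and> b \<in> V then X a b else 0)"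
    by (intro sum.cong refl) auto
  finally show ?thesis by simp
qed

lemma sg_sq: "sg a b * sg a b = (1::'k::comm_ring_1)" by (simp add: sg_def)
lemma sg_swap: "a \<noteq> b \<Longrightarrow> sg b a = - (sg a b :: 'k::comm_ring_1)" by (auto simp: sg_def)

definition delta :: "nat set \<Rightarrow> nat \<Rightarrow> (nat set \<times> (nat \<Rightarrow> nat)) \<Rightarrow> 'k::comm_ring_1" where
  "delta P c = (\<lambda>p. if p = ({c}, ind (P - {c})) then 1 else 0)"

lemma eF_add: "eF A (\<lambda>p. f p + g p) = eF A f + eF A g" by (simp add: eF_def)
lemma eF_smult: "eF A (\<lambda>p. c * f p) = c * eF A f" by (simp add: eF_def)
lemma PhiF_add: "PhiF P Q A (\<lambda>p. f p + g p) = PhiF P Q A f + PhiF P Q A g"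
  by (simp add: PhiF_def sum.distrib distrib_left)
lemma PhiF_smult: "PhiF P Q A (\<lambda>p. c * f p) = c * PhiF P Q A f"
  by (simp add: PhiF_def sum_distrib_left mult.left_commute)
lemma sigF_add: "sigF P A (\<lambda>p. f p + g p) = sigF P A f + sigF P A g"
  by (simp add: sigF_def sum.distrib)
lemma sigF_smult: "sigF P A (\<lambda>p. c * f p) = c * sigF P A f"
  by (simp add: sigF_def sum_distrib_left)

locale twoface =
  fixes m :: nat and K :: "nat set set" and N1 N2 :: "nat set"
  assumes sc: "simplicial_complex m K" and mt: "minimal_Taylor m K"
   and mn1: "minimal_nonface m K N1" and mn2: "minimal_nonface m K N2"
   and neq: "N1 \<noteq> N2" and disj: "N1 \<inter> N2 = {}"
begin

lemma N1m: "N1 \<subseteq> {1..m}" and N2m: "N2 \<subseteq> {1..m}" and N1ne: "N1 \<noteq> {}" and N2ne: "N2 \<noteq> {}"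
  and N1K: "N1 \<notin> K" and N2K: "N2 \<notin> K"
  using mn1 mn2 by (auto simp: minimal_nonface_def)

lemma fin1[simp]: "finite N1" and fin2[simp]: "finite N2"
  using N1m N2m finite_subset by blast+

lemma emptyK: "{} \<in> K" using sc by (simp add: simplicial_complex_def)

lemma downK: "S \<in> K \<Longrightarrow> T \<subseteq> S \<Longrightarrow> T \<in> K"
  using sc by (auto simp: simplicial_complex_def)

lemma exists_mnf: "finite S \<Longrightarrow> S \<notin> K \<Longrightarrow> \<exists>T\<subseteq>S. T \<notin> K \<and> (\<forall>i\<in>T. T - {i} \<in> K)"
proof (induction S rule: finite_psubset_induct)
  case (psubset S)
  show ?case
  proof (cases "\<forall>i\<in>S. S - {i} \<in> K")
    case True thus ?thesis using psubset by blast
  next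
    case False then obtain i where i: "i\<in>S" "S - {i} \<notin> K" by blast
    then have "S - {i} \<subset> S" by blast
    from psubset.IH[OF this i(2)] show ?thesis by blast
  qed
qed

lemma face: assumes "S \<subseteq> N1 \<union> N2" "\<not> N1 \<subseteq> S" "\<not> N2 \<subseteq> S" shows "S \<in> K"
proof (rule ccontr)
  assume nS: "S \<notin> K"
  have "finite S" using assms(1) by (meson finite_UnI fin1 fin2 finite_subset)
  from exists_mnf[OF this nS] obtain T where T: "T \<subseteq> S" "T \<notin> K" "\<forall>i\<in>T. T - {i} \<in> K" by blast
  have "T \<noteq> {}" using T emptyK by auto
  moreover have "T \<subseteq> {1..m}" using T assms(1) N1m N2m by auto
  ultimately have mT: "minimal_nonface m K T" using T by (auto simp: minimal_nonface_def)
  have "T \<noteq> N1" "T \<noteq> N2" using T assms by auto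
  let ?I = "{N1, N2, T}"
  have "?I \<subseteq> {N. minimal_nonface m K N}" "?I \<noteq> {}" using mT mn1 mn2 by auto
  then have "\<Union>?I - \<Union>(?I - {T}) \<noteq> {}" using mt unfolding minimal_Taylor_def by blast
  moreover have "?I - {T} = {N1, N2}" using \<open>T \<noteq> N1\<close> \<open>T \<noteq> N2\<close> by auto
  ultimately show False using T assms(1) by auto
qed

lemma nonface1: "N1 \<subseteq> S \<Longrightarrow> S \<notin> K" using downK N1K by blast
lemma nonface2: "N2 \<subseteq> S \<Longrightarrow> S \<notin> K" using downK N2K by blast

lemma sub1: assumes "e \<in> N1" shows "N1 - {e} \<in> K"
  using mn1 assms by (auto simp: minimal_nonface_def)
lemma sub2: assumes "e \<in> N2" shows "N2 - {e} \<in> K"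
  using mn2 assms by (auto simp: minimal_nonface_def)


abbreviation "NN \<equiv> N1 \<union> N2"

lemma NNm: "NN \<subseteq> {1..m}" using N1m N2m by auto
lemma finNN[simp]: "finite NN" by simp

lemma faceab: "a \<in> N1 \<Longrightarrow> b \<in> N2 \<Longrightarrow> NN - {a, b} \<in> K"
  by (rule face) auto

lemma summand_split:
  fixes f g :: "(nat set \<times> (nat \<Rightarrow> nat)) \<Rightarrow> 'k::comm_ring_1"
  assumes a: "a \<in> N1" and b: "b \<in> N2" and A: "A \<subseteq> NN"
  shows "sg a b * (ssign (A \<inter> {a,b}) ({a,b} - A) * kbar f (A \<inter> {a,b}, ind (A - {a,b}))
           * g ({a,b} - A, ind (NN - {a,b} - A)))
   = (if a \<in> A \<and> b \<in> A then - (sg a b * f ({a,b}, ind (A - {a,b}))) * eF (NN - A) g else 0)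
   + (if a \<in> NN - A \<and> b \<in> NN - A then - eF A f * (sg a b * g ({a,b}, ind ((NN - A) - {a,b}))) else 0)
   + (if a \<in> A \<and> b \<in> NN - A then f ({a}, ind (A - {a})) * g ({b}, ind ((NN - A) - {b})) else 0)
   - (if b \<in> A \<and> a \<in> NN - A then f ({b}, ind (A - {b})) * g ({a}, ind ((NN - A) - {a})) else 0)"
proof -
  have ab: "a \<noteq> b" using a b disj by auto
  have aN: "a \<in> NN" and bN: "b \<in> NN" using a b by auto
  consider "a \<in> A" "b \<in> A" | "a \<in> A" "b \<notin> A" | "a \<notin> A" "b \<in> A" | "a \<notin> A" "b \<notin> A" by blast
  then show ?thesis
  proof cases
    case 1
    then have e: "A \<inter> {a,b} = {a,b}" "{a,b} - A = {}" "NN - {a,b} - A = NN - A" by auto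
    have c: "card {a,b} = 2" using ab by simp
    have "kbar f ({a,b}, ind (A - {a,b})) = - f ({a,b}, ind (A - {a,b}))" by (simp add: kbar_def c)
    then have l: "sg a b * (ssign (A \<inter> {a,b}) ({a,b} - A) * kbar f (A \<inter> {a,b}, ind (A - {a,b}))
           * g ({a,b} - A, ind (NN - {a,b} - A))) = - (sg a b * f ({a,b}, ind (A - {a,b}))) * eF (NN - A) g"
      unfolding e eF_def by simp
    show ?thesis unfolding l using 1 by simp
  next
    case 2
    then have e: "A \<inter> {a,b} = {a}" "{a,b} - A = {b}" "A - {a,b} = A - {a}" "NN - {a,b} - A = (NN - A) - {b}" by auto
    have "sg a b * (sg a b * f ({a}, ind (A - {a})) * g ({b}, ind (NN - A - {b}))) =
       (sg a b * sg a b) * f ({a}, ind (A - {a})) * g ({b}, ind (NN - A - {b}))" by (simp add: algebra_simps)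
    then have l: "sg a b * (ssign (A \<inter> {a,b}) ({a,b} - A) * kbar f (A \<inter> {a,b}, ind (A - {a,b}))
           * g ({a,b} - A, ind (NN - {a,b} - A))) = f ({a}, ind (A - {a})) * g ({b}, ind (NN - A - {b}))"
      unfolding e by (simp add: kbar_def ssign_single sg_sq)
    show ?thesis unfolding l using 2 bN by simp
  next
    case 3
    then have e: "A \<inter> {a,b} = {b}" "{a,b} - A = {a}" "A - {a,b} = A - {b}" "NN - {a,b} - A = (NN - A) - {a}" by auto
    have "sg a b * (sg b a * f ({b}, ind (A - {b})) * g ({a}, ind (NN - A - {a}))) =
       - ((sg a b * sg a b) * f ({b}, ind (A - {b})) * g ({a}, ind (NN - A - {a})))" by (simp add: algebra_simps sg_swap[OF ab])
    then have l: "sg a b * (ssign (A \<inter> {a,b}) ({a,b} - A) * kbar f (A \<inter> {a,b}, ind (A - {a,b}))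
           * g ({a,b} - A, ind (NN - {a,b} - A))) = - (f ({b}, ind (A - {b})) * g ({a}, ind (NN - A - {a})))"
      unfolding e by (simp add: kbar_def ssign_single sg_sq)
    show ?thesis unfolding l using 3 aN by simp
  next
    case 4
    then have e: "A \<inter> {a,b} = {}" "{a,b} - A = {a,b}" "A - {a,b} = A" "NN - {a,b} - A = (NN - A) - {a,b}" by auto
    have l: "sg a b * (ssign (A \<inter> {a,b}) ({a,b} - A) * kbar f (A \<inter> {a,b}, ind (A - {a,b}))
           * g ({a,b} - A, ind (NN - {a,b} - A))) = - eF A f * (sg a b * g ({a,b}, ind ((NN - A) - {a,b})))"
      unfolding e by (simp add: kbar_def eF_def)
    show ?thesis unfolding l using 4 aN bN by simp
  qed
qed


lemma Psi_decomp:
  fixes f g :: "(nat set \<times> (nat \<Rightarrow> nat)) \<Rightarrow> 'k::comm_ring_1"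
  shows "Psi m K N1 N2 f g = (\<Sum>A\<in>Pow NN.
      - (PhiF N1 N2 A f * eF (NN - A) g) - eF A f * PhiF N1 N2 (NN - A) g
      + sigF N1 A f * sigF N2 (NN - A) g - sigF N2 A f * sigF N1 (NN - A) g)"
proof -
  have "Psi m K N1 N2 f g = (\<Sum>a\<in>N1. \<Sum>b\<in>N2. sg a b * kmult m K (kbar f) g ({a,b}, ind (NN - {a,b})))"
    unfolding Psi_def PhiF_def by (simp add: Int_absorb1)
  also have "\<dots> = (\<Sum>a\<in>N1. \<Sum>b\<in>N2. sg a b * (\<Sum>A\<in>Pow NN. ssign (A \<inter> {a,b}) ({a,b} - A) * kbar f (A \<inter> {a,b}, ind (A - {a,b}))
           * g ({a,b} - A, ind (NN - {a,b} - A))))"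
  proof (intro sum.cong refl)
    fix a b assume a: "a \<in> N1" and b: "b \<in> N2"
    have u: "{a,b} \<union> (NN - {a,b}) = NN" using a b by auto
    have k: "kmult m K (kbar f) g ({a,b}, ind (NN - {a,b})) = (\<Sum>A\<in>Pow ({a,b} \<union> (NN - {a,b})). ssign (A \<inter> {a,b}) ({a,b} - A) * kbar f (A \<inter> {a,b}, ind (A - {a,b}))
           * g ({a,b} - A, ind (NN - {a,b} - A)))"
      by (rule kmult_pt) (use a b NNm faceab[OF a b] in auto)
    have "kmult m K (kbar f) g ({a,b}, ind (NN - {a,b})) = (\<Sum>A\<in>Pow NN. ssign (A \<inter> {a,b}) ({a,b} - A) * kbar f (A \<inter> {a,b}, ind (A - {a,b}))
           * g ({a,b} - A, ind (NN - {a,b} - A)))"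
      using k by (simp only: u)
    then show "sg a b * kmult m K (kbar f) g ({a,b}, ind (NN - {a,b})) = sg a b * (\<Sum>A\<in>Pow NN. ssign (A \<inter> {a,b}) ({a,b} - A) * kbar f (A \<inter> {a,b}, ind (A - {a,b}))
           * g ({a,b} - A, ind (NN - {a,b} - A)))" by simp
  qed
  also have "\<dots> = (\<Sum>A\<in>Pow NN. \<Sum>a\<in>N1. \<Sum>b\<in>N2. sg a b * (ssign (A \<inter> {a,b}) ({a,b} - A) * kbar f (A \<inter> {a,b}, ind (A - {a,b}))
           * g ({a,b} - A, ind (NN - {a,b} - A))))"
    by (simp add: sum_distrib_left sum.swap[of _ "Pow NN"])
  also have "\<dots> = (\<Sum>A\<in>Pow NN.
      - (PhiF N1 N2 A f * eF (NN - A) g) - eF A f * PhiF N1 N2 (NN - A) g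
      + sigF N1 A f * sigF N2 (NN - A) g - sigF N2 A f * sigF N1 (NN - A) g)"
  proof (rule sum.cong[OF refl])
    fix A assume "A \<in> Pow NN"
    then have A: "A \<subseteq> NN" by simp
    have "(\<Sum>a\<in>N1. \<Sum>b\<in>N2. sg a b * (ssign (A \<inter> {a,b}) ({a,b} - A) * kbar f (A \<inter> {a,b}, ind (A - {a,b}))
           * g ({a,b} - A, ind (NN - {a,b} - A)))) =
      (\<Sum>a\<in>N1. \<Sum>b\<in>N2. (if a \<in> A \<and> b \<in> A then - (sg a b * f ({a,b}, ind (A - {a,b}))) * eF (NN - A) g else 0)
   + (if a \<in> NN - A \<and> b \<in> NN - A then - eF A f * (sg a b * g ({a,b}, ind ((NN - A) - {a,b}))) else 0)
   + (if a \<in> A \<and> b \<in> NN - A then f ({a}, ind (A - {a})) * g ({b}, ind ((NN - A) - {b})) else 0)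
   - (if b \<in> A \<and> a \<in> NN - A then f ({b}, ind (A - {b})) * g ({a}, ind ((NN - A) - {a})) else 0))"
      apply (intro sum.cong refl)
      apply (rule summand_split[OF _ _ A])
       apply assumption+
      done
    also have "\<dots> = (\<Sum>a\<in>N1. \<Sum>b\<in>N2. (if a \<in> A \<and> b \<in> A then - (sg a b * f ({a,b}, ind (A - {a,b}))) * eF (NN - A) g else 0))
      + (\<Sum>a\<in>N1. \<Sum>b\<in>N2. (if a \<in> NN - A \<and> b \<in> NN - A then - eF A f * (sg a b * g ({a,b}, ind ((NN - A) - {a,b}))) else 0))
      + (\<Sum>a\<in>N1. \<Sum>b\<in>N2. (if a \<in> A \<and> b \<in> NN - A then f ({a}, ind (A - {a})) * g ({b}, ind ((NN - A) - {b})) else 0))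
      - (\<Sum>b\<in>N2. \<Sum>a\<in>N1. (if b \<in> A \<and> a \<in> NN - A then f ({b}, ind (A - {b})) * g ({a}, ind ((NN - A) - {a})) else 0))"
      by (simp add: sum.distrib sum_subtractf sum.swap[of _ N2 N1])
    also have "\<dots> = - (PhiF N1 N2 A f * eF (NN - A) g) - eF A f * PhiF N1 N2 (NN - A) g
      + sigF N1 A f * sigF N2 (NN - A) g - sigF N2 A f * sigF N1 (NN - A) g"
    proof -
      have h1: "(\<Sum>a\<in>N1. \<Sum>b\<in>N2. (if a \<in> A \<and> b \<in> A then - (sg a b * f ({a,b}, ind (A - {a,b}))) * eF (NN - A) g else 0))
         = (\<Sum>a\<in>A \<inter> N1. \<Sum>b\<in>A \<inter> N2. - (sg a b * f ({a,b}, ind (A - {a,b}))) * eF (NN - A) g)"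
        by (rule sum_if2) simp_all
      have h2: "(\<Sum>a\<in>N1. \<Sum>b\<in>N2. (if a \<in> NN - A \<and> b \<in> NN - A then - eF A f * (sg a b * g ({a,b}, ind ((NN - A) - {a,b}))) else 0))
         = (\<Sum>a\<in>(NN - A) \<inter> N1. \<Sum>b\<in>(NN - A) \<inter> N2. - eF A f * (sg a b * g ({a,b}, ind ((NN - A) - {a,b}))))"
        by (rule sum_if2) simp_all
      have h3: "(\<Sum>a\<in>N1. \<Sum>b\<in>N2. (if a \<in> A \<and> b \<in> NN - A then f ({a}, ind (A - {a})) * g ({b}, ind ((NN - A) - {b})) else 0))
         = (\<Sum>a\<in>A \<inter> N1. \<Sum>b\<in>(NN - A) \<inter> N2. f ({a}, ind (A - {a})) * g ({b}, ind ((NN - A) - {b})))"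
        by (rule sum_if2) simp_all
      have h4: "(\<Sum>b\<in>N2. \<Sum>a\<in>N1. (if b \<in> A \<and> a \<in> NN - A then f ({b}, ind (A - {b})) * g ({a}, ind ((NN - A) - {a})) else 0))
         = (\<Sum>b\<in>A \<inter> N2. \<Sum>a\<in>(NN - A) \<inter> N1. f ({b}, ind (A - {b})) * g ({a}, ind ((NN - A) - {a})))"
        by (rule sum_if2) simp_all
      show ?thesis unfolding h1 h2 h3 h4 PhiF_def sigF_def
        by (simp add: sum_distrib_left sum_distrib_right sum_negf sum_product)
          (simp add: sum.swap[of _ "(NN - A) \<inter> N2"] sum.swap[of _ "(NN - A) \<inter> N1"])
    qed
    finally show "(\<Sum>a\<in>N1. \<Sum>b\<in>N2. sg a b * (ssign (A \<inter> {a,b}) ({a,b} - A) * kbar f (A \<inter> {a,b}, ind (A - {a,b}))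
           * g ({a,b} - A, ind (NN - {a,b} - A)))) = - (PhiF N1 N2 A f * eF (NN - A) g) - eF A f * PhiF N1 N2 (NN - A) g
      + sigF N1 A f * sigF N2 (NN - A) g - sigF N2 A f * sigF N1 (NN - A) g" .
  qed
  finally show ?thesis .
qed


lemma kd: assumes "J \<subseteq> NN" "S \<subseteq> NN" "J \<inter> S = {}" "S \<in> K"
  shows "kdiff m K f (J, ind S) = (\<Sum>j\<in>S. ksign j (insert j J) * f (insert j J, ind (S - {j})))"
proof -
  have "J \<subseteq> {1..m}" "S \<subseteq> {1..m}" using assms(1,2) NNm by blast+
  then show ?thesis using kdiff_pt[of J m S K f] assms(3,4) by simp
qed

lemma cocycle:
  fixes w :: "(nat set \<times> (nat \<Rightarrow> nat)) \<Rightarrow> 'k::comm_ring_1"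
  assumes M: "M \<subseteq> NN"
  shows "PhiF N1 N2 M (kdiff m K w) = 0"
proof -
  define F where "F a b j = sg a b * ksign j {j,a,b} * w ({j,a,b}, ind (M - {a,b} - {j}))" for a b j
  have fin: "finite M" using M finNN finite_subset by blast
  have X: "sg a b * kdiff m K w ({a,b}, ind (M - {a,b})) =
       (\<Sum>j\<in>M \<inter> N1 - {a}. F a b j) + (\<Sum>j\<in>M \<inter> N2 - {b}. F a b j)"
    if a: "a \<in> M \<inter> N1" and b: "b \<in> M \<inter> N2" for a b
  proof -
    have S: "M - {a,b} \<in> K" using a b M by (intro face) auto
    have "kdiff m K w ({a,b}, ind (M - {a,b})) = (\<Sum>j\<in>M - {a,b}. ksign j (insert j {a,b}) * w (insert j {a,b}, ind (M - {a,b} - {j})))"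
      using a b M S by (intro kd) auto
    then have "sg a b * kdiff m K w ({a,b}, ind (M - {a,b})) = (\<Sum>j\<in>M - {a,b}. F a b j)"
      by (simp add: sum_distrib_left F_def mult.assoc)
    also have sp: "M - {a,b} = (M \<inter> N1 - {a}) \<union> (M \<inter> N2 - {b})" using M a b disj by auto
    have "(\<Sum>j\<in>M - {a,b}. F a b j) = (\<Sum>j\<in>(M \<inter> N1 - {a}) \<union> (M \<inter> N2 - {b}). F a b j)"
      by (rule sum.cong[OF sp]) simp
    also have "\<dots> = (\<Sum>j\<in>M \<inter> N1 - {a}. F a b j) + (\<Sum>j\<in>M \<inter> N2 - {b}. F a b j)"
      using fin disj by (intro sum.union_disjoint) auto
    finally show ?thesis .
  qed
  have "PhiF N1 N2 M (kdiff m K w) = (\<Sum>a\<in>M \<inter> N1. \<Sum>b\<in>M \<inter> N2. (\<Sum>j\<in>M \<inter> N1 - {a}. F a b j) + (\<Sum>j\<in>M \<inter> N2 - {b}. F a b j))"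
    unfolding PhiF_def using X by (intro sum.cong refl) auto
  also have "\<dots> = (\<Sum>b\<in>M \<inter> N2. \<Sum>a\<in>M \<inter> N1. \<Sum>j\<in>M \<inter> N1 - {a}. F a b j) + (\<Sum>a\<in>M \<inter> N1. \<Sum>b\<in>M \<inter> N2. \<Sum>j\<in>M \<inter> N2 - {b}. F a b j)"
    by (simp add: sum.distrib sum.swap[of _ "M \<inter> N1"])
  also have "(\<Sum>b\<in>M \<inter> N2. \<Sum>a\<in>M \<inter> N1. \<Sum>j\<in>M \<inter> N1 - {a}. F a b j) = 0"
  proof (rule sum.neutral, rule ballI)
    fix b assume b: "b \<in> M \<inter> N2"
    show "(\<Sum>a\<in>M \<inter> N1. \<Sum>j\<in>M \<inter> N1 - {a}. F a b j) = 0"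
    proof (rule antisym_sum)
      show "finite (M \<inter> N1)" using fin by simp
      fix a j assume a: "a \<in> M \<inter> N1" and j: "j \<in> M \<inter> N1" and aj: "a \<noteq> j"
      have d: "j \<noteq> b" "a \<noteq> b" using a j b disj by auto
      have e1: "{j,a,b} = {a,j,b}" by auto
      have e2: "M - {a,b} - {j} = M - {j,b} - {a}" by auto
      have s: "sg a b * ksign j {a,j,b} = - (sg j b * ksign a {a,j,b})" using sign3a[of j a b] aj d by (simp add: e1)
      show "F a b j = - F j b a" unfolding F_def e1 e2 by (metis (no_types) mult.assoc mult_minus_left s)
    qed
  qed
  also have "(\<Sum>a\<in>M \<inter> N1. \<Sum>b\<in>M \<inter> N2. \<Sum>j\<in>M \<inter> N2 - {b}. F a b j) = 0"
  proof (rule sum.neutral, rule ballI)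
    fix a assume a: "a \<in> M \<inter> N1"
    show "(\<Sum>b\<in>M \<inter> N2. \<Sum>j\<in>M \<inter> N2 - {b}. F a b j) = 0"
    proof (rule antisym_sum)
      show "finite (M \<inter> N2)" using fin by simp
      fix b j assume b: "b \<in> M \<inter> N2" and j: "j \<in> M \<inter> N2" and bj: "b \<noteq> j"
      have d: "j \<noteq> a" "a \<noteq> b" using a j b disj by auto
      have e1: "{j,a,b} = {b,a,j}" by auto
      have e2: "M - {a,b} - {j} = M - {a,j} - {b}" by auto
      have s: "sg a b * ksign j {b,a,j} = - (sg a j * ksign b {b,a,j})" using sign3b[of j a b] bj d by (simp add: e1)
      show "F a b j = - F a j b" unfolding F_def e1 e2 by (metis (no_types) mult.assoc mult_minus_left s)
    qed
  qed
  finally show ?thesis by simp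
qed

lemma Phi_cycle:
  fixes x :: "(nat set \<times> (nat \<Rightarrow> nat)) \<Rightarrow> 'k::comm_ring_1"
  assumes cyc: "kdiff m K x = (\<lambda>_. 0)" and A: "A \<subseteq> NN" and nA: "\<not> (N1 \<subseteq> A \<and> N2 \<subseteq> A)"
  shows "PhiF N1 N2 A x = 0"
proof -
  have fin: "finite A" using A finNN finite_subset by blast
  define G where "G b j = ksign j {j,b} * x ({j,b}, ind (A - {b} - {j}))" for b j
  have Z: "(\<Sum>b\<in>A \<inter> P. \<Sum>j\<in>A \<inter> Q. G b j) = 0"
    if PQ: "(P = N1 \<and> Q = N2) \<or> (P = N2 \<and> Q = N1)" and nQ: "\<not> Q \<subseteq> A" for P Q
  proof -
    have D: "A - {b} = (A \<inter> P - {b}) \<union> (A \<inter> Q)" if "b \<in> A \<inter> P" for b using that A PQ disj by auto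
    have "0 = (\<Sum>b\<in>A \<inter> P. kdiff m K x ({b}, ind (A - {b})))" by (simp add: cyc)
    also have "\<dots> = (\<Sum>b\<in>A \<inter> P. \<Sum>j\<in>A - {b}. G b j)"
    proof (intro sum.cong refl)
      fix b assume b: "b \<in> A \<inter> P"
      have "A - {b} \<in> K" using A nQ PQ b by (intro face) auto
      then show "kdiff m K x ({b}, ind (A - {b})) = (\<Sum>j\<in>A - {b}. G b j)"
        unfolding G_def using A b by (subst kd) (auto simp: insert_commute)
    qed
    also have "\<dots> = (\<Sum>b\<in>A \<inter> P. (\<Sum>j\<in>A \<inter> P - {b}. G b j) + (\<Sum>j\<in>A \<inter> Q. G b j))"
      using fin disj PQ by (intro sum.cong refl) (auto simp: D intro!: sum.union_disjoint)
    also have "\<dots> = (\<Sum>b\<in>A \<inter> P. \<Sum>j\<in>A \<inter> P - {b}. G b j) + (\<Sum>b\<in>A \<inter> P. \<Sum>j\<in>A \<inter> Q. G b j)"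
      by (simp add: sum.distrib)
    also have "(\<Sum>b\<in>A \<inter> P. \<Sum>j\<in>A \<inter> P - {b}. G b j) = 0"
    proof (rule antisym_sum)
      show "finite (A \<inter> P)" using fin by simp
      fix b j assume "b \<in> A \<inter> P" "j \<in> A \<inter> P" "b \<noteq> j"
      have e1: "{j,b} = {b,j}" by auto
      have e2: "A - {b} - {j} = A - {j} - {b}" by auto
      show "G b j = - G j b" unfolding G_def e1 e2 using \<open>b \<noteq> j\<close>
        by (simp add: ksign_pair[of j b, unfolded e1] ksign_pair[of b j] sg_swap[of j b])
    qed
    finally show ?thesis by simp
  qed
  show ?thesis
  proof (cases "N1 \<subseteq> A")
    case False
    have "0 = (\<Sum>b\<in>A \<inter> N2. \<Sum>j\<in>A \<inter> N1. G b j)" using Z[of N2 N1] False by simp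
    also have "\<dots> = (\<Sum>j\<in>A \<inter> N1. \<Sum>b\<in>A \<inter> N2. G b j)" by (rule sum.swap)
    also have "\<dots> = PhiF N1 N2 A x" unfolding PhiF_def
    proof (intro sum.cong refl)
      fix j b assume "j \<in> A \<inter> N1" "b \<in> A \<inter> N2"
      then have "j \<noteq> b" using disj by auto
      have e1: "{j,b} = {j,b}" by auto
      have e2: "A - {b} - {j} = A - {j,b}" by auto
      show "G b j = sg j b * x ({j,b}, ind (A - {j,b}))" unfolding G_def e2
        by (subst ksign_pair[OF \<open>j \<noteq> b\<close>]) (rule refl)
    qed
    finally show ?thesis by simp
  next
    case True
    then have nN2: "\<not> N2 \<subseteq> A" using nA by blast
    have "0 = (\<Sum>b\<in>A \<inter> N1. \<Sum>j\<in>A \<inter> N2. G b j)" using Z[of N1 N2] nN2 by simp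
    also have "\<dots> = - PhiF N1 N2 A x" unfolding PhiF_def sum_negf[symmetric]
    proof (intro sum.cong refl)
      fix b j assume "b \<in> A \<inter> N1" "j \<in> A \<inter> N2"
      then have "j \<noteq> b" using disj by auto
      have e1: "{j,b} = {b,j}" by auto
      have e2: "A - {b} - {j} = A - {b,j}" by auto
      have kf: "ksign j {b,j} = sg j b" using ksign_pair[of j b, unfolded e1] \<open>j \<noteq> b\<close> by simp
      have sw: "sg b j = - sg j b" using sg_swap[of j b] \<open>j \<noteq> b\<close> by simp
      show "G b j = - (sg b j * x ({b,j}, ind (A - {b,j})))" unfolding G_def e1 e2
        by (simp only: kf sw mult_minus_left minus_minus)
    qed
    finally show ?thesis by (simp add: eq_neg_iff_add_eq_0)
  qed
qed


lemma lemS: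
  fixes w :: "(nat set \<times> (nat \<Rightarrow> nat)) \<Rightarrow> 'k::comm_ring_1"
  assumes C: "C \<subseteq> NN" and CK: "\<forall>e\<in>C. C - {e} \<in> K"
  shows "(\<Sum>e\<in>C. kdiff m K w ({e}, ind (C - {e}))) = 0"
proof -
  have fin: "finite C" using C finNN finite_subset by blast
  define G where "G e j = ksign j {j,e} * w ({j,e}, ind (C - {e} - {j}))" for e j
  have "(\<Sum>e\<in>C. kdiff m K w ({e}, ind (C - {e}))) = (\<Sum>e\<in>C. \<Sum>j\<in>C - {e}. G e j)"
  proof (rule sum.cong[OF refl])
    fix e assume e: "e \<in> C"
    show "kdiff m K w ({e}, ind (C - {e})) = (\<Sum>j\<in>C - {e}. G e j)"
      unfolding G_def using C e CK by (subst kd) auto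
  qed
  also have "\<dots> = 0"
  proof (rule antisym_sum[OF fin])
    fix e j assume "e \<in> C" "j \<in> C" "e \<noteq> j"
    have e1: "{j,e} = {e,j}" by auto
    have e2: "C - {e} - {j} = C - {j} - {e}" by auto
    have kf: "ksign j {e,j} = sg j e" using ksign_pair[of j e, unfolded e1] \<open>e \<noteq> j\<close> by simp
    have kf2: "ksign e {e,j} = sg e j" using ksign_pair[of e j] \<open>e \<noteq> j\<close> by simp
    have sw: "sg e j = - sg j e" using sg_swap[of j e] \<open>e \<noteq> j\<close> by simp
    show "G e j = - G j e" unfolding G_def e1 e2
      by (simp only: kf kf2 sw mult_minus_left minus_minus)
  qed
  finally show ?thesis .
qed

lemma sig_sum: assumes C: "C \<subseteq> NN"
  shows "sigF N1 C f + sigF N2 C f = (\<Sum>e\<in>C. f ({e}, ind (C - {e})))"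
proof -
  have fin: "finite C" using C finNN finite_subset by blast
  have "C = C \<inter> N1 \<union> C \<inter> N2" using C by auto
  then have "(\<Sum>e\<in>C. f ({e}, ind (C - {e}))) = (\<Sum>e\<in>C \<inter> N1 \<union> C \<inter> N2. f ({e}, ind (C - {e})))" by simp
  also have "\<dots> = sigF N1 C f + sigF N2 C f" unfolding sigF_def
    using fin disj by (intro sum.union_disjoint) auto
  finally show ?thesis by simp
qed

lemma lemS2:
  fixes w :: "(nat set \<times> (nat \<Rightarrow> nat)) \<Rightarrow> 'k::comm_ring_1"
  assumes C: "C \<subseteq> NN" and CK: "\<forall>e\<in>C. C - {e} \<in> K"
  shows "sigF N1 C (kdiff m K w) + sigF N2 C (kdiff m K w) = 0"
proof -
  have "sigF N1 C (kdiff m K w) + sigF N2 C (kdiff m K w) = (\<Sum>e\<in>C. kdiff m K w ({e}, ind (C - {e})))"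
    by (rule sig_sum[OF C])
  also have "\<dots> = 0" by (rule lemS[OF C CK])
  finally show ?thesis .
qed

lemma cyc1:
  fixes x :: "(nat set \<times> (nat \<Rightarrow> nat)) \<Rightarrow> 'k::comm_ring_1"
  assumes cyc: "kdiff m K x = (\<lambda>_. 0)" and A: "A \<subseteq> NN" "A \<in> K"
  shows "(\<Sum>e\<in>A. x ({e}, ind (A - {e}))) = 0"
proof -
  have "0 = kdiff m K x ({}, ind A)" by (simp add: cyc)
  also have "\<dots> = (\<Sum>j\<in>A. ksign j (insert j {}) * x (insert j {}, ind (A - {j})))"
    using A by (intro kd) auto
  finally show ?thesis by simp
qed

lemma eF_empty: "eF {} (kdiff m K w) = 0"
  unfolding eF_def using emptyK by (subst kd) auto

lemma Psi_cyc_bd: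
  fixes x w :: "(nat set \<times> (nat \<Rightarrow> nat)) \<Rightarrow> 'k::comm_ring_1"
  assumes cyc: "kdiff m K x = (\<lambda>_. 0)"
  shows "Psi m K N1 N2 x (kdiff m K w) = 0"
  unfolding Psi_decomp
proof (rule sum.neutral, rule ballI)
  fix A assume "A \<in> Pow NN"
  then have A: "A \<subseteq> NN" by simp
  define C where "C = NN - A"
  have C: "C \<subseteq> NN" unfolding C_def by auto
  have t1: "PhiF N1 N2 A x * eF C (kdiff m K w) = 0"
  proof (cases "A = NN")
    case True then show ?thesis unfolding C_def by (simp add: eF_empty)
  next
    case False
    then have "\<not> (N1 \<subseteq> A \<and> N2 \<subseteq> A)" using A by auto
    then show ?thesis using Phi_cycle[OF cyc A] by simp
  qed
  have t2: "eF A x * PhiF N1 N2 C (kdiff m K w) = 0" using cocycle[OF C, of w] by simp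
  have t3: "sigF N1 A x * sigF N2 C (kdiff m K w) - sigF N2 A x * sigF N1 C (kdiff m K w) = 0"
  proof -
    consider "N1 \<subseteq> A" | "N2 \<subseteq> A" | "\<not> N1 \<subseteq> A" "\<not> N2 \<subseteq> A" by blast
    then show ?thesis
    proof cases
      case 1
      then have CN1: "C \<inter> N1 = {}" unfolding C_def by auto
      then have CN2: "C \<subseteq> N2" using C by auto
      have z1: "sigF N1 C (kdiff m K w) = 0" unfolding sigF_def CN1 by simp
      have "\<forall>e\<in>C. C - {e} \<in> K"
      proof
        fix e assume e: "e \<in> C"
        show "C - {e} \<in> K"
        proof (rule face)
          show "C - {e} \<subseteq> NN" using C by auto
          show "\<not> N1 \<subseteq> C - {e}" using CN1 N1ne by auto
          show "\<not> N2 \<subseteq> C - {e}" using e CN2 by auto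
        qed
      qed
      then have "sigF N1 C (kdiff m K w) + sigF N2 C (kdiff m K w) = 0"
        by (rule lemS2[OF C])
      then have z2: "sigF N2 C (kdiff m K w) = 0" using z1 by simp
      show ?thesis by (simp add: z1 z2)
    next
      case 2
      then have CN2: "C \<inter> N2 = {}" unfolding C_def by auto
      then have CN1: "C \<subseteq> N1" using C by auto
      have z1: "sigF N2 C (kdiff m K w) = 0" unfolding sigF_def CN2 by simp
      have "\<forall>e\<in>C. C - {e} \<in> K"
      proof
        fix e assume e: "e \<in> C"
        show "C - {e} \<in> K"
        proof (rule face)
          show "C - {e} \<subseteq> NN" using C by auto
          show "\<not> N2 \<subseteq> C - {e}" using CN2 N2ne by auto
          show "\<not> N1 \<subseteq> C - {e}" using e CN1 by auto
        qed
      qed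
      then have "sigF N1 C (kdiff m K w) + sigF N2 C (kdiff m K w) = 0"
        by (rule lemS2[OF C])
      then have z2: "sigF N1 C (kdiff m K w) = 0" using z1 by simp
      show ?thesis by (simp add: z1 z2)
    next
      case 3
      then have AK: "A \<in> K" using A by (intro face) auto
      have sA: "sigF N1 A x + sigF N2 A x = 0" using sig_sum[OF A, of x] cyc1[OF cyc A AK] by simp
      show ?thesis
      proof (cases "N1 \<subseteq> C \<or> N2 \<subseteq> C")
        case True
        then have "A \<inter> N1 = {} \<or> A \<inter> N2 = {}" unfolding C_def by auto
        then have "sigF N1 A x = 0 \<or> sigF N2 A x = 0" unfolding sigF_def by auto
        then have "sigF N1 A x = 0 \<and> sigF N2 A x = 0" using sA by (auto simp: add_eq_0_iff2)
        then show ?thesis by simp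
      next
        case False
        then have CK: "C \<in> K" using C by (intro face) auto
        have "\<forall>e\<in>C. C - {e} \<in> K" using CK downK by blast
        then have sC: "sigF N1 C (kdiff m K w) + sigF N2 C (kdiff m K w) = 0"
          by (rule lemS2[OF C])
        have a1: "sigF N2 A x = - sigF N1 A x" using sA by (simp add: eq_neg_iff_add_eq_0 add.commute)
        have a2: "sigF N2 C (kdiff m K w) = - sigF N1 C (kdiff m K w)" using sC by (simp add: eq_neg_iff_add_eq_0 add.commute)
        show ?thesis unfolding a1 a2 by (simp add: algebra_simps)
      qed
    qed
  qed
  show "- (PhiF N1 N2 A x * eF (NN - A) (kdiff m K w)) - eF A x * PhiF N1 N2 (NN - A) (kdiff m K w) +
         sigF N1 A x * sigF N2 (NN - A) (kdiff m K w) - sigF N2 A x * sigF N1 (NN - A) (kdiff m K w) = 0"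
    using t1 t2 t3 unfolding C_def by (simp add: algebra_simps)
qed


lemma Psi_add1: "Psi m K N1 N2 (\<lambda>p. f p + g p) h = Psi m K N1 N2 f h + Psi m K N1 N2 g h"
  unfolding Psi_decomp eF_add PhiF_add sigF_add sum.distrib[symmetric]
  by (intro sum.cong refl) (simp add: algebra_simps)
lemma Psi_add2: "Psi m K N1 N2 h (\<lambda>p. f p + g p) = Psi m K N1 N2 h f + Psi m K N1 N2 h g"
  unfolding Psi_decomp eF_add PhiF_add sigF_add sum.distrib[symmetric]
  by (intro sum.cong refl) (simp add: algebra_simps)
lemma Psi_smult1: "Psi m K N1 N2 (\<lambda>p. c * f p) h = c * Psi m K N1 N2 f h"
  unfolding Psi_decomp eF_smult PhiF_smult sigF_smult sum_distrib_left
  by (intro sum.cong refl) (simp add: algebra_simps)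
lemma Psi_smult2: "Psi m K N1 N2 h (\<lambda>p. c * f p) = c * Psi m K N1 N2 h f"
  unfolding Psi_decomp eF_smult PhiF_smult sigF_smult sum_distrib_left
  by (intro sum.cong refl) (simp add: algebra_simps)

lemma Psi_sum1:
  fixes c :: "'b \<Rightarrow> 'k::comm_ring_1"
  assumes "finite F"
  shows "Psi m K N1 N2 (\<lambda>p. \<Sum>b\<in>F. c b * bb b p) h = (\<Sum>b\<in>F. c b * Psi m K N1 N2 (bb b) h)"
  using assms
proof (induction F rule: finite_induct)
  case empty
  have "Psi m K N1 N2 (\<lambda>p. 0 * h p) h = 0 * Psi m K N1 N2 h h" by (rule Psi_smult1)
  then show ?case by simp
next
  case (insert x F)
  have "Psi m K N1 N2 (\<lambda>p. \<Sum>b\<in>insert x F. c b * bb b p) h =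
        Psi m K N1 N2 (\<lambda>p. c x * bb x p + (\<Sum>b\<in>F. c b * bb b p)) h"
    using insert by simp
  also have "\<dots> = c x * Psi m K N1 N2 (bb x) h + Psi m K N1 N2 (\<lambda>p. \<Sum>b\<in>F. c b * bb b p) h"
    by (simp add: Psi_add1 Psi_smult1)
  finally show ?case using insert by simp
qed

lemma Psi_sum2:
  fixes c :: "'b \<Rightarrow> 'k::comm_ring_1"
  assumes "finite F"
  shows "Psi m K N1 N2 h (\<lambda>p. \<Sum>b\<in>F. c b * bb b p) = (\<Sum>b\<in>F. c b * Psi m K N1 N2 h (bb b))"
  using assms
proof (induction F rule: finite_induct)
  case empty
  have "Psi m K N1 N2 h (\<lambda>p. 0 * h p) = 0 * Psi m K N1 N2 h h" by (rule Psi_smult2)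
  then show ?case by simp
next
  case (insert x F)
  have "Psi m K N1 N2 h (\<lambda>p. \<Sum>b\<in>insert x F. c b * bb b p) =
        Psi m K N1 N2 h (\<lambda>p. c x * bb x p + (\<Sum>b\<in>F. c b * bb b p))"
    using insert by simp
  also have "\<dots> = c x * Psi m K N1 N2 h (bb x) + Psi m K N1 N2 h (\<lambda>p. \<Sum>b\<in>F. c b * bb b p)"
    by (simp add: Psi_add2 Psi_smult2)
  finally show ?case using insert by simp
qed

lemma delta_sig_same: assumes "finite P" "c \<in> P" shows "sigF P A (delta P c :: _ \<Rightarrow> 'k::comm_ring_1) = (if A = P then 1 else 0)"
proof (cases "A = P")
  case True
  have "sigF P A (delta P c :: _ \<Rightarrow> 'k) = (\<Sum>a\<in>P. if a = c then 1 else 0)"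
    unfolding sigF_def delta_def True by (intro sum.cong refl) auto
  also have "\<dots> = 1" using assms by (simp add: sum.delta')
  finally show ?thesis using True by simp
next
  case False
  have "sigF P A (delta P c :: _ \<Rightarrow> 'k) = 0" unfolding sigF_def delta_def
  proof (rule sum.neutral, rule ballI)
    fix a assume a: "a \<in> A \<inter> P"
    have "({a}, ind (A - {a})) \<noteq> ({c}, ind (P - {c}))"
    proof
      assume "({a}, ind (A - {a})) = ({c}, ind (P - {c}))"
      then have "a = c" "A - {a} = P - {c}" by auto
      then have "A = P" using a assms(2) by blast
      then show False using False by simp
    qed
    then show "(if ({a}, ind (A - {a})) = ({c}, ind (P - {c})) then 1 else 0) = (0::'k)" by simp
  qed
  then show ?thesis using False by simp
qed

lemma delta_sig_other: assumes "c \<notin> Q" shows "sigF Q A (delta P c :: _ \<Rightarrow> 'k::comm_ring_1) = 0"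
  unfolding sigF_def delta_def using assms by (intro sum.neutral) auto

lemma delta_eF: "eF A (delta P c :: _ \<Rightarrow> 'k::comm_ring_1) = 0"
  unfolding eF_def delta_def by simp

lemma delta_PhiF: "PhiF N1 N2 A (delta P c :: _ \<Rightarrow> 'k::comm_ring_1) = 0"
  unfolding PhiF_def delta_def using disj by (intro sum.neutral ballI) auto

lemma Psi_deltas: assumes a0: "a0 \<in> N1" and b0: "b0 \<in> N2"
  shows "Psi m K N1 N2 (delta N1 a0) (delta N2 b0) = (1::'k::comm_ring_1)"
proof -
  have a0': "a0 \<notin> N2" and b0': "b0 \<notin> N1" using a0 b0 disj by auto
  have "Psi m K N1 N2 (delta N1 a0) (delta N2 b0) = (\<Sum>A\<in>Pow NN. if A = N1 then (1::'k) else 0)"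
    unfolding Psi_decomp delta_eF delta_PhiF delta_sig_same[OF fin1 a0] delta_sig_same[OF fin2 b0]
      delta_sig_other[OF a0'] delta_sig_other[OF b0']
  proof (intro sum.cong refl)
    fix A assume "A \<in> Pow NN"
    then have "(NN - A = N2) = (A = N1)" using disj by auto
    then show "- (0 * 0) - 0 * 0 + (if A = N1 then 1 else 0) * (if NN - A = N2 then 1 else 0) - 0 * 0 = (if A = N1 then (1::'k) else 0)"
      by simp
  qed
  also have "\<dots> = 1" by (simp add: sum.delta')
  finally show ?thesis .
qed

lemma Psi_bd_delta:
  fixes w :: "(nat set \<times> (nat \<Rightarrow> nat)) \<Rightarrow> 'k::comm_ring_1"
  assumes b0: "b0 \<in> N2"
  shows "Psi m K N1 N2 (kdiff m K w) (delta N2 b0) = 0"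
proof -
  have b0': "b0 \<notin> N1" using b0 disj by auto
  have "Psi m K N1 N2 (kdiff m K w) (delta N2 b0) = (\<Sum>A\<in>Pow NN. if A = N1 then sigF N1 N1 (kdiff m K w) else 0)"
    unfolding Psi_decomp delta_eF delta_PhiF delta_sig_same[OF fin2 b0] delta_sig_other[OF b0']
  proof (intro sum.cong refl)
    fix A assume "A \<in> Pow NN"
    then have "(NN - A = N2) = (A = N1)" using disj by auto
    then show "- (PhiF N1 N2 A (kdiff m K w) * 0) - eF A (kdiff m K w) * 0 + sigF N1 A (kdiff m K w) * (if NN - A = N2 then 1 else 0) -
          sigF N2 A (kdiff m K w) * 0 = (if A = N1 then sigF N1 N1 (kdiff m K w) else 0)"
      by simp
  qed
  also have "\<dots> = sigF N1 N1 (kdiff m K w)" by (simp add: sum.delta')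
  also have "\<dots> = 0"
  proof -
    have "sigF N1 N1 (kdiff m K w) = (\<Sum>e\<in>N1. kdiff m K w ({e}, ind (N1 - {e})))"
      unfolding sigF_def by simp
    also have "\<dots> = 0" using lemS[of N1 w] sub1 by auto
    finally show ?thesis .
  qed
  finally show ?thesis .
qed


lemma delta_chain: assumes P: "minimal_nonface m K P" and c: "c \<in> P"
  shows "(delta P c :: _ \<Rightarrow> 'k::comm_ring_1) \<in> kchains m K"
proof -
  have "{x. (delta P c :: _ \<Rightarrow> 'k) x \<noteq> 0} = {({c}, ind (P - {c}))}" by (auto simp: delta_def)
  moreover have "({c}, ind (P - {c})) \<in> kbasis m K"
    using P c by (auto simp: kbasis_def minimal_nonface_def)
  ultimately show ?thesis by (simp add: kchains_def)
qed

lemma delta_pos: "kpos (delta P c :: _ \<Rightarrow> 'k::comm_ring_1)"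
  by (simp add: kpos_def delta_def)

lemma delta_cycle: assumes P: "minimal_nonface m K P" and c: "c \<in> P"
  shows "kdiff m K (delta P c :: _ \<Rightarrow> 'k::comm_ring_1) = (\<lambda>_. 0)"
proof (rule ext, clarify)
  fix J \<beta>
  have PK: "P \<notin> K" using P by (simp add: minimal_nonface_def)
  have ne: "(insert j J, \<beta>(j := \<beta> j - 1)) \<noteq> ({c}, ind (P - {c}))"
    if j: "j \<notin> J" "0 < \<beta> j" and b: "msupp \<beta> \<in> K" for j
  proof
    assume eq: "(insert j J, \<beta>(j := \<beta> j - 1)) = ({c}, ind (P - {c}))"
    then have jc: "j = c" and J: "J = {}" using j by auto
    have f: "(\<beta>(c := \<beta> c - 1)) i = ind (P - {c}) i" for i using eq jc by simp
    have "msupp \<beta> = P"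
    proof (rule set_eqI)
      fix i show "i \<in> msupp \<beta> \<longleftrightarrow> i \<in> P"
      proof (cases "i = c")
        case True then show ?thesis using j jc c by (simp add: msupp_def)
      next
        case False then show ?thesis using f[of i] by (auto simp: msupp_def ind_def split: if_splits)
      qed
    qed
    then show False using b PK by simp
  qed
  show "kdiff m K (delta P c :: _ \<Rightarrow> 'k) (J, \<beta>) = 0"
    unfolding kdiff_def prod.case
  proof (cases "(J, \<beta>) \<in> kbasis m K")
    case True
    then have b: "msupp \<beta> \<in> K" by (simp add: kbasis_def)
    have "(\<Sum>j \<in> {j\<in>{1..m}. j \<notin> J \<and> 0 < \<beta> j}.
          ksign j (insert j J) * (delta P c :: _ \<Rightarrow> 'k) (insert j J, \<beta>(j := \<beta> j - 1))) = 0"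
      using ne b by (intro sum.neutral ballI) (auto simp: delta_def)
    then show "(if (J, \<beta>) \<in> kbasis m K then \<Sum>j \<in> {j\<in>{1..m}. j \<notin> J \<and> 0 < \<beta> j}.
          ksign j (insert j J) * (delta P c :: _ \<Rightarrow> 'k) (insert j J, \<beta>(j := \<beta> j - 1)) else 0) = 0"
      using True by simp
  qed simp
qed

end

theorem proposition2p6:
  fixes m :: nat and K :: "nat set set"
  assumes "simplicial_complex m K"
    and "minimal_Taylor m K"
    and "(0::'k::comm_ring_1) \<noteq> 1"
    and "golod TYPE('k) m K"
  shows "\<forall>N1 N2. minimal_nonface m K N1 \<and> minimal_nonface m K N2 \<and> N1 \<noteq> N2
           \<longrightarrow> N1 \<inter> N2 \<noteq> {}"
proof (intro allI impI notI)
  fix N1 N2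
  assume h: "minimal_nonface m K N1 \<and> minimal_nonface m K N2 \<and> N1 \<noteq> N2" and dj: "N1 \<inter> N2 = {}"
  interpret tf: twoface m K N1 N2
    using assms(1,2) h dj by unfold_locales auto
  obtain a0 where a0: "a0 \<in> N1" using tf.N1ne by blast
  obtain b0 where b0: "b0 \<in> N2" using tf.N2ne by blast
  define z1 where "z1 = (delta N1 a0 :: _ \<Rightarrow> 'k)"
  define z2 where "z2 = (delta N2 b0 :: _ \<Rightarrow> 'k)"
  obtain B :: "((nat set \<times> (nat \<Rightarrow> nat)) \<Rightarrow> 'k) set" and \<mu> where
    Bsub: "B \<subseteq> {z \<in> kchains m K. kdiff m K z = (\<lambda>_. 0) \<and> kpos z \<and> khomog m z}" and
    Bgen: "\<forall>z \<in> kchains m K. kdiff m K z = (\<lambda>_. 0) \<and> kpos z \<longrightarrow>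
          (\<exists>F c w. finite F \<and> F \<subseteq> B \<and> w \<in> kchains m K \<and>
             z = (\<lambda>x. (\<Sum>b\<in>F. c b * b x) + kdiff m K w x))" and
    \<mu>1: "\<forall>b\<in>B. \<mu> [b] = b" and
    \<mu>2: "\<forall>bs. set bs \<subseteq> B \<and> 2 \<le> length bs \<longrightarrow>
          \<mu> bs \<in> kchains m K \<and> kpos (\<mu> bs) \<and>
          kdiff m K (\<mu> bs) =
            (\<lambda>x. \<Sum>j\<in>{1..<length bs}. kmult m K (kbar (\<mu> (take j bs))) (\<mu> (drop j bs)) x)"
    using assms(4) unfolding golod_def apply (elim exE conjE) apply (rule that) apply assumption+ done
  have z1p: "z1 \<in> kchains m K" "kdiff m K z1 = (\<lambda>_. 0)" "kpos z1"
    unfolding z1_def using tf.delta_chain[OF tf.mn1 a0] tf.delta_cycle[OF tf.mn1 a0] tf.delta_pos by auto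
  have z2p: "z2 \<in> kchains m K" "kdiff m K z2 = (\<lambda>_. 0)" "kpos z2"
    unfolding z2_def using tf.delta_chain[OF tf.mn2 b0] tf.delta_cycle[OF tf.mn2 b0] tf.delta_pos by auto
  obtain F1 and c1 :: "_ \<Rightarrow> 'k" and w1 :: "_ \<Rightarrow> 'k" where F1: "finite F1" "F1 \<subseteq> B" and z1e: "z1 = (\<lambda>x. (\<Sum>b\<in>F1. c1 b * b x) + kdiff m K w1 x)"
    using Bgen[rule_format, OF z1p(1) conjI[OF z1p(2) z1p(3)]] apply (elim exE conjE) apply (rule that) apply assumption+ done
  obtain F2 and c2 :: "_ \<Rightarrow> 'k" and w2 :: "_ \<Rightarrow> 'k" where F2: "finite F2" "F2 \<subseteq> B" and z2e: "z2 = (\<lambda>x. (\<Sum>b\<in>F2. c2 b * b x) + kdiff m K w2 x)"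
    using Bgen[rule_format, OF z2p(1) conjI[OF z2p(2) z2p(3)]] apply (elim exE conjE) apply (rule that) apply assumption+ done
  have Bcyc: "kdiff m K b = (\<lambda>_. 0)" if "b \<in> B" for b using Bsub that by auto
  have Pbb: "Psi m K N1 N2 b b' = 0" if b: "b \<in> B" and b': "b' \<in> B" for b b'
  proof -
    have "kdiff m K (\<mu> [b, b']) = kmult m K (kbar (\<mu> [b])) (\<mu> [b'])"
      using \<mu>2[rule_format, of "[b, b']"] b b' by simp
    then have e: "kmult m K (kbar b) b' = kdiff m K (\<mu> [b, b'])" using \<mu>1 b b' by simp
    show ?thesis unfolding Psi_def e by (rule tf.cocycle) simp
  qed
  have Pbz2: "Psi m K N1 N2 b z2 = 0" if b: "b \<in> B" for b
  proof -
    have "Psi m K N1 N2 b z2 = Psi m K N1 N2 b (\<lambda>x. \<Sum>b'\<in>F2. c2 b' * b' x) + Psi m K N1 N2 b (kdiff m K w2)"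
      unfolding z2e by (rule tf.Psi_add2)
    also have "\<dots> = (\<Sum>b'\<in>F2. c2 b' * Psi m K N1 N2 b b') + 0"
      using tf.Psi_sum2[OF F2(1), of b c2 "\<lambda>b. b"] tf.Psi_cyc_bd[OF Bcyc[OF b]] by simp
    also have "\<dots> = 0" using Pbb[OF b] F2(2) by (auto intro!: sum.neutral)
    finally show ?thesis .
  qed
  have "Psi m K N1 N2 z1 z2 = Psi m K N1 N2 (\<lambda>x. \<Sum>b\<in>F1. c1 b * b x) z2 + Psi m K N1 N2 (kdiff m K w1) z2"
    unfolding z1e by (rule tf.Psi_add1)
  also have "\<dots> = (\<Sum>b\<in>F1. c1 b * Psi m K N1 N2 b z2) + 0"
    using tf.Psi_sum1[OF F1(1), of c1 "\<lambda>b. b" z2] tf.Psi_bd_delta[OF b0, of w1] unfolding z2_def by simp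
  also have "\<dots> = 0" using Pbz2 F1(2) by (auto intro!: sum.neutral)
  finally have "Psi m K N1 N2 z1 z2 = (0::'k)" .
  moreover have "Psi m K N1 N2 z1 z2 = (1::'k)" unfolding z1_def z2_def by (rule tf.Psi_deltas[OF a0 b0])
  ultimately show False using assms(3) by simp
qed

end
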